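(* Assume that the set $\mathcal{F}=\{(\mathbf{x},\mathbf{y}):\mathbf{x}\in\mathbb{R}^{n_1}_+,\ A\mathbf{x}\le\mathbf{b},\ \mathbf{y}_s\in\mathbb{R}^{n_2}_+,\ T_s\mathbf{x}+W_s\mathbf{y}_s\ge\mathbf{h}_s\ \forall s\in S\}$ is compact. Define the Lagrangian $\mathcal{L}:\mathcal{F}\times\mathcal{M}^F_+(\mathcal{C})\to\mathbb{R}$ by $$\mathcal{L}(\mathbf{x},\mathbf{y},\mu)=\mathbf{f}^\top\mathbf{x}+\sum_{s\in S}p_s\mathbf{q}_s^\top\mathbf{y}_s+\int_{\mathcal{C}}\operatorname{CVaR}_\alpha(\mathbf{c}^\top\hat{\mathbf{G}}(\mathbf{x},\mathbf{y}))\,\mu(\mathrm{d}\mathbf{c})-\int_{\mathcal{C}}\operatorname{CVaR}_\alpha(\mathbf{c}^\top\mathbf{Z})\,\mu(\mathrm{d}\mathbf{c}),$$ and the Lagrangian dual problem $\max_{\mu\in\mathcal{M}^F_+(\mathcal{C})}\min_{(\mathbf{x},\mathbf{y})\in\mathcal{F}}\mathcal{L}(\mathbf{x},\mathbf{y},\mu)$. If the primal problem $(\mathrm{LinearP})$, namely $\min\{\mathbf{f}^\top\mathbf{x}+\sum_sp_s\mathbf{q}_s^\top\mathbf{y}_s:(\mathbf{x},\mathbf{y})\in\mathcal{F},\ \operatorname{CVaR}_\alpha(\mathbf{c}^\top\hat{\mathbf{G}}(\mathbf{x},\mathbf{y}))\le\operatorname{CVaR}_\alpha(\mathbf{c}^\top\mathbf{Z})\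 \forall\mathbf{c}\in\mathcal{C}\}$, has an optimal solution, then the Lagrangian dual problem also has an optimal solution and the optimal objective values coincide. Moreover, a primal feasible solution $(\mathbf{x}^*,\mathbf{y}^* )$ of $(\mathrm{LinearP})$ and a $\mu^*\in\mathcal{M}^F_+(\mathcal{C})$ are simultaneously optimal (for the primal and the Lagrangian dual, respectively) if and only if $$\int_{\mathcal{C}}\operatorname{CVaR}_\alpha(\mathbf{c}^\top\hat{\mathbf{G}}(\mathbf{x}^*,\mathbf{y}^* ))\,\mu^*(\mathrm{d}\mathbf{c})=\int_{\mathcal{C}}\operatorname{CVaR}_\alpha(\mathbf{c}^\top\mathbf{Z})\,\mu^*(\mathrm{d}\mathbf{c})\quad\text{and}\quad \mathcal{L}(\mathbf{x}^*,\mathbf{y}^*,\mu^* )=\min_{(\mathbf{x},\mathbf{y})\in\mathcal{F}}\mathcal{L}(\mathbf{x},\mathbf{y},\mu^* ).$$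
   Context: Finite probability space $\Omega=\{\omega_1,\dots,\omega_m\}$, $\Pi(\omega_s)=p_s>0$, $S=\{1,\dots,m\}$; smaller values are preferred. $\operatorname{CVaR}_\alpha(V)=\min_{\eta\in\mathbb{R}}\{\eta+\frac{1}{1-\alpha}\mathbb{E}[(V-\eta)_+]\}$ for $\alpha\in[0,1)$. Benchmark $\mathbf{Z}$: random vector in $\mathbb{R}^d$ with finitely many realizations. $\mathcal{C}$: nonempty polyhedron contained in the unit simplex of $\mathbb{R}^d$. $\mathcal{M}^F_+(\mathcal{C})$: the set of finitely supported finite nonnegative measures on $\mathcal{C}$, with $\int_{\mathcal{C}}u(\mathbf{c})\mu(\mathrm{d}\mathbf{c})=\sum_{\mathbf{c}:\mu(\{\mathbf{c}\})>0}u(\mathbf{c})\mu(\{\mathbf{c}\})$. Data: $A\in\mathbb{R}^{m_1\times n_1}$, $\mathbf{b}\in\mathbb{R}^{m_1}$, $\mathbf{f}\in\mathbb{R}^{n_1}$; for each $s$: $\mathbf{q}_s\in\mathbb{R}^{n_2}$, $T_s\in\mathbb{R}^{m_2\times n_1}$, $W_s\in\mathbb{R}^{m_2\times n_2}$, $\mathbf{h}_s\in\mathbb{R}^{m_2}$, $\bar{\mathbf{g}}_s\in\mathbb{R}^{d\times n_1}$, $\tilde{\mathbf{g}}_s\in\mathbb{R}^{d\times n_2}$, $\hat{\mathbf{g}}_s(\mathbf{x},\mathbf{y}_s)=\bar{\mathbf{g}}_s\mathbf{x}+\tilde{\mathbf{g}}_s\mathbf{y}_s$. $\hat{\mathbf{G}}(\mathbf{x},\mathbf{y})$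 is the random vector with value $\hat{\mathbf{g}}_s(\mathbf{x},\mathbf{y}_s)$ at $\omega_s$; $\mathbf{y}=(\mathbf{y}_s)_{s\in S}$. *)

theory Defs
  imports "HOL-Analysis.Analysis"
begin

text \<open>The minimum is attained, so it coincides with the infimum used here.\<close>
definition cvar :: "real \<Rightarrow> 'i set \<Rightarrow> ('i \<Rightarrow> real) \<Rightarrow> ('i \<Rightarrow> real) \<Rightarrow> real" where
  "cvar \<alpha> I w V = (INF \<eta>::real. \<eta> + (1 / (1 - \<alpha>)) * (\<Sum>i\<in>I. w i * max 0 (V i - \<eta>)))"

text \<open>Finitely supported finite nonnegative measures on C, represented by their
  point masses (mass function).\<close>
definition MFplus :: "'a set \<Rightarrow> ('a \<Rightarrow> real) set" where
  "MFplus C = {\<mu>. (\<forall>c. 0 \<le> \<mu> c) \<and> finite {c. \<mu> c \<noteq> 0} \<and> {c. \<mu> c \<noteq> 0} \<subseteq> C}"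

definition fint :: "('a \<Rightarrow> real) \<Rightarrow> ('a \<Rightarrow> real) \<Rightarrow> real" where
  "fint \<mu> u = (\<Sum>c\<in>{c. \<mu> c \<noteq> 0}. u c * \<mu> c)"

definition unit_simplex :: "(real^'d) set" where
  "unit_simplex = {c. (\<forall>i. 0 \<le> c $ i) \<and> (\<Sum>i\<in>UNIV. c $ i) = 1}"

end

theory Submission
  imports Defs
begin


lemma cone_combo_eq:
  fixes g :: "'i \<Rightarrow> 'a::euclidean_space"
  assumes "finite I"
  shows "{\<Sum>i\<in>I. l i *\<^sub>R g i | l. \<forall>i\<in>I. 0 \<le> l i} = convex_cone hull (g ` I)"
    (is "?K = _")
proof
  have "(\<Sum>i\<in>I. l i *\<^sub>R g i) \<in> convex_cone hull (g ` I)" if "\<forall>i\<in>I. 0 \<le> l i" for l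
    using assms that
  proof (induction I rule: finite_induct)
    case empty then show ?case by (simp add: convex_cone_hull_contains_0)
  next
    case (insert j J)
    have "g j \<in> convex_cone hull (g ` insert j J)" by (simp add: hull_inc)
    hence a: "l j *\<^sub>R g j \<in> convex_cone hull (g ` insert j J)"
      using insert.prems by (simp add: convex_cone_hull_mul)
    have "(\<Sum>i\<in>J. l i *\<^sub>R g i) \<in> convex_cone hull (g ` J)" using insert by simp
    moreover have "convex_cone hull (g ` J) \<subseteq> convex_cone hull (g ` insert j J)"
      by (rule hull_mono) auto
    ultimately show ?case using a insert(1,2)
      by (simp add: convex_cone_hull_add subsetD)
  qed
  then show "?K \<subseteq> convex_cone hull (g ` I)" by blast
next
  show "convex_cone hull (g ` I) \<subseteq> ?K"
  proof (rule hull_minimal)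
    show "g ` I \<subseteq> ?K"
    proof
      fix x assume "x \<in> g ` I"
      then obtain j where j: "j \<in> I" "x = g j" by auto
      have "(\<Sum>i\<in>I. (if i = j then 1 else 0) *\<^sub>R g i) = g j"
        using assms j by (simp add: sum.delta[symmetric] if_distrib[of "\<lambda>c. c *\<^sub>R _"] cong: if_cong)
      then show "x \<in> ?K" using j
        by (intro CollectI exI[of _ "\<lambda>i. if i = j then 1 else 0"]) auto
    qed
    show "convex_cone ?K"
      unfolding convex_cone_iff
    proof (intro conjI ballI allI impI)
      show "0 \<in> ?K" by (intro CollectI exI[of _ "\<lambda>i. 0"]) auto
    next
      fix x y assume "x \<in> ?K" "y \<in> ?K"
      then obtain l1 l2 where "x = (\<Sum>i\<in>I. l1 i *\<^sub>R g i)" "\<forall>i\<in>I. 0 \<le> l1 i"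
        "y = (\<Sum>i\<in>I. l2 i *\<^sub>R g i)" "\<forall>i\<in>I. 0 \<le> l2 i" by blast
      then show "x + y \<in> ?K"
        by (intro CollectI exI[of _ "\<lambda>i. l1 i + l2 i"])
           (auto simp: scaleR_add_left sum.distrib)
    next
      fix x and c :: real assume "x \<in> ?K" "0 \<le> c"
      then obtain l1 where "x = (\<Sum>i\<in>I. l1 i *\<^sub>R g i)" "\<forall>i\<in>I. 0 \<le> l1 i" by blast
      then show "c *\<^sub>R x \<in> ?K" using \<open>0 \<le> c\<close>
        by (intro CollectI exI[of _ "\<lambda>i. c * l1 i"])
           (auto simp: scaleR_sum_right)
    qed
  qed
qed

lemma farkas:
  fixes g :: "'i \<Rightarrow> 'a::euclidean_space"
  assumes "finite I"
  shows "(\<exists>l. (\<forall>i\<in>I. 0 \<le> l i) \<and> y = (\<Sum>i\<in>I. l i *\<^sub>R g i)) \<or>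
         (\<exists>w. 0 < w \<bullet> y \<and> (\<forall>i\<in>I. w \<bullet> g i \<le> 0))"
proof (cases "y \<in> convex_cone hull (g ` I)")
  case True
  then show ?thesis using cone_combo_eq[OF assms, of g] by blast
next
  case False
  have "closed (convex_cone hull (g ` I))"
    using assms by (simp add: closed_convex_cone_hull)
  then obtain a b where ab: "a \<bullet> y < b" "\<forall>x\<in>convex_cone hull (g ` I). b < a \<bullet> x"
    using separating_hyperplane_closed_point[OF convex_convex_cone_hull _ False] by blast
  have b0: "b < 0" using ab(2) convex_cone_hull_contains_0 by fastforce
  have "(-a) \<bullet> g i \<le> 0" if "i \<in> I" for i
  proof (rule ccontr)
    assume "\<not> ?thesis"
    hence pos: "a \<bullet> g i < 0" by simp
    define t where "t = b / (a \<bullet> g i)"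
    have t0: "0 \<le> t" using b0 pos by (simp add: t_def divide_nonpos_neg)
    have "g i \<in> convex_cone hull (g ` I)" using that by (simp add: hull_inc)
    hence "t *\<^sub>R g i \<in> convex_cone hull (g ` I)" using t0 by (simp add: convex_cone_hull_mul)
    hence "b < a \<bullet> (t *\<^sub>R g i)" using ab by blast
    also have "a \<bullet> (t *\<^sub>R g i) = b" using pos by (simp add: t_def)
    finally show False by simp
  qed
  moreover have "0 < (-a) \<bullet> y" using ab(1) b0 by simp
  ultimately show ?thesis by blast
qed

lemma lp_lagrange:
  fixes a :: "'i \<Rightarrow> 'a::euclidean_space" and bb :: "'i \<Rightarrow> real" and f :: 'a
  assumes fin: "finite I" and feas0: "\<forall>i\<in>I. a i \<bullet> u0 \<le> bb i"
    and opt: "\<And>u. \<forall>i\<in>I. a i \<bullet> u \<le> bb i \<Longrightarrow> f \<bullet> u0 \<le> f \<bullet> u"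
  shows "\<exists>l. (\<forall>i\<in>I. 0 \<le> l i) \<and> (\<forall>u. f \<bullet> u0 \<le> f \<bullet> u + (\<Sum>i\<in>I. l i * (a i \<bullet> u - bb i)))"
proof -
  define v where "v = f \<bullet> u0"
  define g :: "'i option \<Rightarrow> 'a \<times> real" where
    "g j = (case j of None \<Rightarrow> (0, 1) | Some i \<Rightarrow> (a i, bb i))" for j
  define J where "J = insert None (Some ` I)"
  have finJ: "finite J" using fin by (simp add: J_def)
  have sumJ: "(\<Sum>j\<in>J. h j) = h None + (\<Sum>i\<in>I. h (Some i))" for h :: "'i option \<Rightarrow> 'b::comm_monoid_add"
    using fin by (simp add: J_def sum.reindex)
  from farkas[OF finJ, of "(-f, -v)" g]
  consider (A) l where "\<forall>j\<in>J. 0 \<le> l j" "(-f, -v) = (\<Sum>j\<in>J. l j *\<^sub>R g j)"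
    | (B) w where "0 < w \<bullet> (-f, -v)" "\<forall>j\<in>J. w \<bullet> g j \<le> 0" by blast
  then show ?thesis
  proof cases
    case A
    have E: "(-f, -v) = (0, l None) + (\<Sum>i\<in>I. (l (Some i) *\<^sub>R a i, l (Some i) * bb i))"
      using A(2) unfolding sumJ by (simp add: g_def)
    have eq1: "-f = (\<Sum>i\<in>I. l (Some i) *\<^sub>R a i)"
      using arg_cong[OF E, of fst] by (simp add: fst_sum)
    have eq2: "-v = l None + (\<Sum>i\<in>I. l (Some i) * bb i)"
      using arg_cong[OF E, of snd] by (simp add: snd_sum)
    have lN: "0 \<le> l None" using A(1) by (simp add: J_def)
    show ?thesis
    proof (intro exI[of _ "\<lambda>i. l (Some i)"] conjI allI ballI)
      fix i assume "i \<in> I" then show "0 \<le> l (Some i)" using A(1) by (simp add: J_def)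
    next
      fix u
      have "(\<Sum>i\<in>I. l (Some i) * (a i \<bullet> u - bb i))
            = (\<Sum>i\<in>I. l (Some i) *\<^sub>R a i) \<bullet> u - (\<Sum>i\<in>I. l (Some i) * bb i)"
        by (simp add: inner_sum_left right_diff_distrib sum_subtractf)
      also have "\<dots> = - (f \<bullet> u) + v + l None"
      proof -
        have "(\<Sum>i\<in>I. l (Some i) *\<^sub>R a i) \<bullet> u = - (f \<bullet> u)"
          by (metis eq1 inner_minus_left)
        moreover have "(\<Sum>i\<in>I. l (Some i) * bb i) = -v - l None" using eq2 by linarith
        ultimately show ?thesis by linarith
      qed
      finally show "f \<bullet> u0 \<le> f \<bullet> u + (\<Sum>i\<in>I. l (Some i) * (a i \<bullet> u - bb i))"
        using lN by (simp add: v_def)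
    qed
  next
    case B
    obtain w1 t where w: "w = (w1, t)" by (cases w)
    have t0: "t \<le> 0" using B(2) by (simp add: J_def g_def w)
    have ai: "a i \<bullet> w1 + bb i * t \<le> 0" if "i \<in> I" for i
      using B(2) that by (simp add: J_def g_def w mult.commute inner_commute)
    have pos: "0 < - (f \<bullet> w1) - v * t" using B(1) by (simp add: w mult.commute inner_commute)
    show ?thesis
    proof (cases "t = 0")
      case True
      have "\<forall>i\<in>I. a i \<bullet> (u0 + w1) \<le> bb i" using feas0 ai True by (simp add: inner_add_right) (smt (verit))
      from opt[OF this] have "f \<bullet> u0 \<le> f \<bullet> (u0 + w1)" .
      then show ?thesis using pos True by (simp add: inner_add_right)
    next
      case False
      hence tn: "t < 0" using t0 by simp
      define z where "z = (1 / (-t)) *\<^sub>R w1"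
      have "a i \<bullet> z \<le> bb i" if "i \<in> I" for i
      proof -
        have "a i \<bullet> w1 \<le> bb i * (-t)" using ai[OF that] by simp
        then show ?thesis using tn by (simp add: z_def field_simps)
      qed
      from opt[of z] this have "v \<le> f \<bullet> z" by (simp add: v_def)
      hence "v * (-t) \<le> f \<bullet> w1" using tn by (simp add: z_def field_simps)
      then show ?thesis using pos by simp
    qed
  qed
qed



lemma cvar_pt:
  fixes w \<xi> V :: "'i::finite \<Rightarrow> real"
  assumes al: "0 \<le> \<alpha>" "\<alpha> < 1" and w0: "\<forall>i. 0 \<le> w i"
    and xi: "\<forall>i. 0 \<le> \<xi> i \<and> \<xi> i \<le> (1/(1-\<alpha>)) * w i" "(\<Sum>i\<in>UNIV. \<xi> i) = 1"
  shows "(\<Sum>i\<in>UNIV. \<xi> i * V i) \<le> \<eta> + (1/(1-\<alpha>)) * (\<Sum>i\<in>UNIV. w i * max 0 (V i - \<eta>))"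
proof -
  have "(\<Sum>i\<in>UNIV. \<xi> i * V i) = (\<Sum>i\<in>UNIV. \<xi> i * (V i - \<eta>)) + \<eta> * (\<Sum>i\<in>UNIV. \<xi> i)"
  proof -
    have "(\<Sum>i\<in>UNIV. \<xi> i * V i) = (\<Sum>i\<in>UNIV. \<xi> i * (V i - \<eta>) + \<eta> * \<xi> i)"
      by (rule sum.cong) (auto simp: algebra_simps)
    also have "\<dots> = (\<Sum>i\<in>UNIV. \<xi> i * (V i - \<eta>)) + \<eta> * (\<Sum>i\<in>UNIV. \<xi> i)"
      by (simp add: sum.distrib sum_distrib_left)
    finally show ?thesis .
  qed
  also have "\<dots> = (\<Sum>i\<in>UNIV. \<xi> i * (V i - \<eta>)) + \<eta>" using xi(2) by simp
  also have "(\<Sum>i\<in>UNIV. \<xi> i * (V i - \<eta>)) \<le> (\<Sum>i\<in>UNIV. (1/(1-\<alpha>)) * (w i * max 0 (V i - \<eta>)))"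
  proof (rule sum_mono)
    fix i
    have "\<xi> i * (V i - \<eta>) \<le> \<xi> i * max 0 (V i - \<eta>)" using xi(1) by (simp add: mult_left_mono)
    also have "\<dots> \<le> ((1/(1-\<alpha>)) * w i) * max 0 (V i - \<eta>)"
      using xi(1) by (intro mult_right_mono) auto
    finally show "\<xi> i * (V i - \<eta>) \<le> (1/(1-\<alpha>)) * (w i * max 0 (V i - \<eta>))" by simp
  qed
  finally show ?thesis by (simp add: sum_distrib_left add.commute)
qed

lemma cvar_bdd:
  fixes w V :: "'i::finite \<Rightarrow> real"
  assumes al: "0 \<le> \<alpha>" "\<alpha> < 1" and w0: "\<forall>i. 0 \<le> w i" and w1: "(\<Sum>i\<in>UNIV. w i) = 1"
  shows "bdd_below (range (\<lambda>\<eta>. \<eta> + (1/(1-\<alpha>)) * (\<Sum>i\<in>UNIV. w i * max 0 (V i - \<eta>))))"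
proof -
  have k: "1 \<le> 1/(1-\<alpha>)" using al by simp
  have "\<forall>i. 0 \<le> w i \<and> w i \<le> (1/(1-\<alpha>)) * w i"
    using mult_right_mono[OF k w0[rule_format]] w0 by simp
  from cvar_pt[OF al w0 this w1]
  show ?thesis by (rule bdd_belowI2)
qed

lemma cvar_ge:
  fixes w \<xi> V :: "'i::finite \<Rightarrow> real"
  assumes al: "0 \<le> \<alpha>" "\<alpha> < 1" and w0: "\<forall>i. 0 \<le> w i"
    and xi: "\<forall>i. 0 \<le> \<xi> i \<and> \<xi> i \<le> (1/(1-\<alpha>)) * w i" "(\<Sum>i\<in>UNIV. \<xi> i) = 1"
  shows "(\<Sum>i\<in>UNIV. \<xi> i * V i) \<le> cvar \<alpha> UNIV w V"
  unfolding cvar_def by (rule cINF_greatest) (use cvar_pt[OF al w0 xi] in auto)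

lemma cvar_le:
  fixes w V :: "'i::finite \<Rightarrow> real"
  assumes al: "0 \<le> \<alpha>" "\<alpha> < 1" and w0: "\<forall>i. 0 \<le> w i" and w1: "(\<Sum>i\<in>UNIV. w i) = 1"
  shows "cvar \<alpha> UNIV w V \<le> \<eta> + (1/(1-\<alpha>)) * (\<Sum>i\<in>UNIV. w i * max 0 (V i - \<eta>))"
  unfolding cvar_def by (rule cINF_lower[OF cvar_bdd[OF al w0 w1]]) simp

lemma cvar_attain:
  fixes w V :: "'i::finite \<Rightarrow> real"
  assumes al: "0 \<le> \<alpha>" "\<alpha> < 1" and w0: "\<forall>i. 0 \<le> w i" and w1: "(\<Sum>i\<in>UNIV. w i) = 1"
  shows "\<exists>\<eta>\<in>range V. \<exists>\<xi>. (\<forall>i. 0 \<le> \<xi> i \<and> \<xi> i \<le> (1/(1-\<alpha>)) * w i) \<and> (\<Sum>i\<in>UNIV. \<xi> i) = 1 \<and>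
      (\<Sum>i\<in>UNIV. \<xi> i * V i) = \<eta> + (1/(1-\<alpha>)) * (\<Sum>i\<in>UNIV. w i * max 0 (V i - \<eta>))"
proof -
  define k where "k = 1/(1-\<alpha>)"
  have k1: "1 \<le> k" using al by (simp add: k_def)
  define S where "S = {t \<in> range V. 1 \<le> k * (\<Sum>i\<in>{i. t \<le> V i}. w i)}"
  have finS: "finite S" by (simp add: S_def)
  have "Min (range V) \<in> S"
  proof -
    have "{i. Min (range V) \<le> V i} = UNIV" by auto
    then show ?thesis using k1 w1 by (simp add: S_def)
  qed
  hence Sne: "S \<noteq> {}" by auto
  define \<eta> where "\<eta> = Max S"
  have etaS: "\<eta> \<in> S" using finS Sne by (simp add: \<eta>_def)
  define A where "A = {i. \<eta> < V i}"
  define B where "B = {i. V i = \<eta>}"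
  have AB: "{i. \<eta> \<le> V i} = A \<union> B" "A \<inter> B = {}" by (auto simp: A_def B_def)
  define sA where "sA = (\<Sum>i\<in>A. w i)"
  define sB where "sB = (\<Sum>i\<in>B. w i)"
  have sA0: "0 \<le> sA" and sB0: "0 \<le> sB" using w0 by (auto simp: sA_def sB_def intro: sum_nonneg)
  have h1: "1 \<le> k * (sA + sB)"
    using etaS AB by (simp add: S_def sA_def sB_def sum.union_disjoint)
  have h2: "k * sA \<le> 1"
  proof (cases "A = {}")
    case True then show ?thesis by (simp add: sA_def)
  next
    case False
    define t where "t = Min (V ` A)"
    have tA: "t \<in> V ` A" using False by (simp add: t_def)
    have teta: "\<eta> < t" using tA by (auto simp: A_def)
    have At: "{i. t \<le> V i} = A"
    proof
      show "{i. t \<le> V i} \<subseteq> A" using teta by (auto simp: A_def)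
      show "A \<subseteq> {i. t \<le> V i}" by (auto simp: t_def)
    qed
    show ?thesis
    proof (rule ccontr)
      assume "\<not> ?thesis"
      hence "t \<in> S" using tA At by (auto simp: S_def sA_def)
      hence "t \<le> \<eta>" using finS by (simp add: \<eta>_def)
      then show False using teta by simp
    qed
  qed
  define \<theta> where "\<theta> = (if sB = 0 then 0 else (1 - k * sA) / (k * sB))"
  have th: "0 \<le> \<theta>" "\<theta> \<le> 1" "k * sA + \<theta> * k * sB = 1"
  proof -
    show "0 \<le> \<theta>" using h2 k1 sB0 by (auto simp: \<theta>_def)
    show "\<theta> \<le> 1" using h1 k1 sB0 by (auto simp: \<theta>_def field_simps)
    show "k * sA + \<theta> * k * sB = 1"
      using h1 h2 k1 by (auto simp: \<theta>_def field_simps)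
  qed
  define \<xi> where "\<xi> i = (if \<eta> < V i then k * w i else if V i = \<eta> then \<theta> * k * w i else 0)" for i
  have xi_b: "\<forall>i. 0 \<le> \<xi> i \<and> \<xi> i \<le> k * w i"
  proof
    fix i
    have "0 \<le> k * w i" using k1 w0 by simp
    then show "0 \<le> \<xi> i \<and> \<xi> i \<le> k * w i" using th
      by (auto simp: \<xi>_def mult_le_cancel_right1 mult.assoc intro: mult_left_le_one_le)
  qed
  have xi_s: "(\<Sum>i\<in>UNIV. \<xi> i) = 1"
  proof -
    have "(\<Sum>i\<in>UNIV. \<xi> i) = (\<Sum>i\<in>A. k * w i) + (\<Sum>i\<in>B. \<theta> * k * w i)"
    proof -
      have "(\<Sum>i\<in>UNIV. \<xi> i) = (\<Sum>i\<in>A \<union> B. \<xi> i)"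
        by (rule sum.mono_neutral_right) (auto simp: \<xi>_def A_def B_def)
      also have "\<dots> = (\<Sum>i\<in>A. \<xi> i) + (\<Sum>i\<in>B. \<xi> i)" using AB by (simp add: sum.union_disjoint)
      also have "\<dots> = (\<Sum>i\<in>A. k * w i) + (\<Sum>i\<in>B. \<theta> * k * w i)"
        by (auto simp: \<xi>_def A_def B_def intro!: sum.cong)
      finally show ?thesis .
    qed
    also have "\<dots> = k * sA + \<theta> * k * sB" by (simp add: sA_def sB_def sum_distrib_left)
    finally show ?thesis using th by simp
  qed
  have xi_v: "(\<Sum>i\<in>UNIV. \<xi> i * V i) = \<eta> + k * (\<Sum>i\<in>UNIV. w i * max 0 (V i - \<eta>))"
  proof -
    have pt: "\<xi> i * (V i - \<eta>) = k * (w i * max 0 (V i - \<eta>))" for i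
      by (auto simp: \<xi>_def max_def)
    have "(\<Sum>i\<in>UNIV. \<xi> i * V i) = (\<Sum>i\<in>UNIV. \<xi> i * (V i - \<eta>)) + \<eta> * (\<Sum>i\<in>UNIV. \<xi> i)"
    proof -
    have "(\<Sum>i\<in>UNIV. \<xi> i * V i) = (\<Sum>i\<in>UNIV. \<xi> i * (V i - \<eta>) + \<eta> * \<xi> i)"
      by (rule sum.cong) (auto simp: algebra_simps)
    also have "\<dots> = (\<Sum>i\<in>UNIV. \<xi> i * (V i - \<eta>)) + \<eta> * (\<Sum>i\<in>UNIV. \<xi> i)"
      by (simp add: sum.distrib sum_distrib_left)
    finally show ?thesis .
  qed
    also have "\<dots> = (\<Sum>i\<in>UNIV. k * (w i * max 0 (V i - \<eta>))) + \<eta>" using xi_s pt by simp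
    finally show ?thesis by (simp add: sum_distrib_left)
  qed
  have "\<eta> \<in> range V" using etaS by (simp add: S_def)
  then show ?thesis using xi_b xi_s xi_v unfolding k_def by blast
qed

lemma cvar_eq:
  fixes w V :: "'i::finite \<Rightarrow> real"
  assumes al: "0 \<le> \<alpha>" "\<alpha> < 1" and w0: "\<forall>i. 0 \<le> w i" and w1: "(\<Sum>i\<in>UNIV. w i) = 1"
  shows "\<exists>\<eta>\<in>range V. \<exists>\<xi>. (\<forall>i. 0 \<le> \<xi> i \<and> \<xi> i \<le> (1/(1-\<alpha>)) * w i) \<and> (\<Sum>i\<in>UNIV. \<xi> i) = 1 \<and>
      (\<Sum>i\<in>UNIV. \<xi> i * V i) = cvar \<alpha> UNIV w V \<and>
      cvar \<alpha> UNIV w V = \<eta> + (1/(1-\<alpha>)) * (\<Sum>i\<in>UNIV. w i * max 0 (V i - \<eta>))"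
proof -
  obtain \<eta> \<xi> where e: "\<eta>\<in>range V" "\<forall>i. 0 \<le> \<xi> i \<and> \<xi> i \<le> (1/(1-\<alpha>)) * w i" "(\<Sum>i\<in>UNIV. \<xi> i) = 1"
    "(\<Sum>i\<in>UNIV. \<xi> i * V i) = \<eta> + (1/(1-\<alpha>)) * (\<Sum>i\<in>UNIV. w i * max 0 (V i - \<eta>))"
    using cvar_attain[OF assms, of V] by blast
  have "(\<Sum>i\<in>UNIV. \<xi> i * V i) \<le> cvar \<alpha> UNIV w V" using cvar_ge[OF al w0 e(2,3)] .
  moreover have "cvar \<alpha> UNIV w V \<le> \<eta> + (1/(1-\<alpha>)) * (\<Sum>i\<in>UNIV. w i * max 0 (V i - \<eta>))"
    by (rule cvar_le[OF assms])
  ultimately show ?thesis using e by (intro bexI[OF _ e(1)] exI[of _ \<xi>]) auto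
qed



lemma halfspace_times_UNIV:
  fixes a :: "'a::euclidean_space"
  shows "{x. a \<bullet> x \<le> b} \<times> (UNIV :: 'b::euclidean_space set) = {z. (a, 0::'b) \<bullet> z \<le> b}"
  by (force simp: inner_Pair)

lemma UNIV_times_halfspace:
  fixes a :: "'a::euclidean_space"
  shows "(UNIV :: 'b::euclidean_space set) \<times> {x. a \<bullet> x \<le> b} = {z. (0::'b, a) \<bullet> z \<le> b}"
  by (force simp: inner_Pair)

lemma polyhedron_times_UNIV:
  fixes S :: "'a::euclidean_space set"
  assumes "polyhedron S"
  shows "polyhedron (S \<times> (UNIV :: 'b::euclidean_space set))"
proof -
  obtain F where F: "finite F" "S = \<Inter>F" "\<forall>h\<in>F. \<exists>a b. a \<noteq> 0 \<and> h = {x. a \<bullet> x \<le> b}"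
    using assms unfolding polyhedron_def by blast
  have eq: "S \<times> (UNIV :: 'b set) = \<Inter>((\<lambda>h. h \<times> (UNIV :: 'b set)) ` F)" using F(2) by auto
  have "polyhedron (h \<times> (UNIV :: 'b set))" if hF: "h \<in> F" for h
  proof -
    obtain a b where h0: "a \<noteq> 0 \<and> h = {x. a \<bullet> x \<le> b}" using bspec[OF F(3) hF] by iprover
    then have h: "h = {x. a \<bullet> x \<le> b}" by iprover
    show ?thesis unfolding h halfspace_times_UNIV by (rule polyhedron_halfspace_le)
  qed
  then have "\<And>X. X \<in> (\<lambda>h. h \<times> (UNIV :: 'b set)) ` F \<Longrightarrow> polyhedron X" by blast
  then show ?thesis unfolding eq using F(1) by (intro polyhedron_Inter) simp_all
qed

lemma polyhedron_UNIV_times: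
  fixes S :: "'a::euclidean_space set"
  assumes "polyhedron S"
  shows "polyhedron ((UNIV :: 'b::euclidean_space set) \<times> S)"
proof -
  obtain F where F: "finite F" "S = \<Inter>F" "\<forall>h\<in>F. \<exists>a b. a \<noteq> 0 \<and> h = {x. a \<bullet> x \<le> b}"
    using assms unfolding polyhedron_def by blast
  have eq: "(UNIV :: 'b set) \<times> S = \<Inter>((\<lambda>h. (UNIV :: 'b set) \<times> h) ` F)" using F(2) by auto
  have "polyhedron ((UNIV :: 'b set) \<times> h)" if hF: "h \<in> F" for h
  proof -
    obtain a b where h0: "a \<noteq> 0 \<and> h = {x. a \<bullet> x \<le> b}" using bspec[OF F(3) hF] by iprover
    then have h: "h = {x. a \<bullet> x \<le> b}" by iprover
    show ?thesis unfolding h UNIV_times_halfspace by (rule polyhedron_halfspace_le)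
  qed
  then have "\<And>X. X \<in> (\<lambda>h. (UNIV :: 'b set) \<times> h) ` F \<Longrightarrow> polyhedron X" by blast
  then show ?thesis unfolding eq using F(1) by (intro polyhedron_Inter) simp_all
qed

lemma polyhedron_Times:
  fixes S :: "'a::euclidean_space set" and T :: "'b::euclidean_space set"
  assumes "polyhedron S" "polyhedron T"
  shows "polyhedron (S \<times> T)"
proof -
  have "S \<times> T = (S \<times> UNIV) \<inter> (UNIV \<times> T)" by auto
  then show ?thesis using polyhedron_Int[OF polyhedron_times_UNIV[OF assms(1)] polyhedron_UNIV_times[OF assms(2)]] by simp
qed

lemma poly_hull:
  fixes S :: "'a::euclidean_space set"
  assumes "polyhedron S" "bounded S"
  shows "\<exists>E. finite E \<and> E \<subseteq> S \<and> S = convex hull E"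
proof -
  have "polytope S" using assms by (simp add: polytope_eq_bounded_polyhedron)
  then obtain E where E: "finite E \<and> S = convex hull E" unfolding polytope_def by iprover
  have "E \<subseteq> convex hull E" by (rule hull_subset)
  then show ?thesis using E by (intro exI[of _ E]) simp
qed

lemma conv_le:
  fixes h :: "'a::euclidean_space"
  assumes "\<forall>e\<in>E. h \<bullet> e \<le> t" "x \<in> convex hull E"
  shows "h \<bullet> x \<le> t"
proof -
  have "convex hull E \<subseteq> {x. h \<bullet> x \<le> t}"
    using assms(1) by (intro hull_minimal) (auto simp: convex_halfspace_le)
  then show ?thesis using assms(2) by blast
qed

lemma lin_rep:
  fixes f :: "'a::euclidean_space \<Rightarrow> real"
  assumes "linear f"
  shows "f u = adjoint f 1 \<bullet> u"
  using adjoint_works[OF assms, of u 1] by (simp add: inner_commute)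

lemma lp_lagrange_lin:
  fixes L :: "'i \<Rightarrow> 'a::euclidean_space \<Rightarrow> real" and bb :: "'i \<Rightarrow> real" and ob :: "'a \<Rightarrow> real"
  assumes fin: "finite I" and lin: "\<And>i. i \<in> I \<Longrightarrow> linear (L i)" and lob: "linear ob"
    and feas0: "\<forall>i\<in>I. L i u0 \<le> bb i"
    and opt: "\<And>u. \<forall>i\<in>I. L i u \<le> bb i \<Longrightarrow> ob u0 \<le> ob u"
  shows "\<exists>l. (\<forall>i\<in>I. 0 \<le> l i) \<and> (\<forall>u. ob u0 \<le> ob u + (\<Sum>i\<in>I. l i * (L i u - bb i)))"
proof -
  define a where "a i = adjoint (L i) 1" for i
  define f where "f = adjoint ob 1"
  have La: "L i u = a i \<bullet> u" if "i \<in> I" for i u using lin_rep[OF lin[OF that]] by (simp add: a_def)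
  have obf: "ob u = f \<bullet> u" for u using lin_rep[OF lob] by (simp add: f_def)
  have "\<exists>l. (\<forall>i\<in>I. 0 \<le> l i) \<and> (\<forall>u. f \<bullet> u0 \<le> f \<bullet> u + (\<Sum>i\<in>I. l i * (a i \<bullet> u - bb i)))"
  proof (rule lp_lagrange[OF fin])
    show "\<forall>i\<in>I. a i \<bullet> u0 \<le> bb i" using feas0 La by simp
    fix u assume "\<forall>i\<in>I. a i \<bullet> u \<le> bb i"
    then have "\<forall>i\<in>I. L i u \<le> bb i" using La by simp
    then have "ob u0 \<le> ob u" by (rule opt)
    then show "f \<bullet> u0 \<le> f \<bullet> u" using obf by simp
  qed
  then obtain l where l: "\<forall>i\<in>I. 0 \<le> l i" "\<forall>u. f \<bullet> u0 \<le> f \<bullet> u + (\<Sum>i\<in>I. l i * (a i \<bullet> u - bb i))"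
    by blast
  have "(\<Sum>i\<in>I. l i * (a i \<bullet> u - bb i)) = (\<Sum>i\<in>I. l i * (L i u - bb i))" for u
    by (rule sum.cong) (auto simp: La)
  then show ?thesis using l obf by (intro exI[of _ l]) auto
qed

lemma lin_lower:
  fixes f :: "'a::euclidean_space \<Rightarrow> real"
  assumes "linear f" "norm u \<le> B"
  shows "- (norm (adjoint f 1) * B) \<le> f u"
proof -
  have "\<bar>adjoint f 1 \<bullet> u\<bar> \<le> norm (adjoint f 1) * norm u" by (rule Cauchy_Schwarz_ineq2)
  also have "\<dots> \<le> norm (adjoint f 1) * B" using assms(2) by (simp add: mult_left_mono)
  finally show ?thesis using lin_rep[OF assms(1), of u] by linarith
qed



lemma ball_image_iff': "(\<forall>x\<in>f ` A. P x) \<longleftrightarrow> (\<forall>x\<in>A. P (f x))" by blast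

datatype ('a, 'b, 'c, 'd, 'e, 'f) cidx = Cx 'a | CA 'b | Cy 'c 'd | CT 'c 'e | CZ 'f

lemma lin_ell:
  fixes gbar :: "'s::finite \<Rightarrow> real^'n1^'d" and gtil :: "'s \<Rightarrow> real^'n2^'d" and \<xi> :: "real^'s"
  shows "linear (\<lambda>u::((real^'n1) \<times> (real^'n2^'s)). \<Sum>s\<in>UNIV. \<xi>$s * (c \<bullet> (gbar s *v fst u + gtil s *v (snd u $ s))))"
  by (rule linearI) (simp_all add: matrix_vector_right_distrib matrix_vector_mult_scaleR inner_add_right
      distrib_left sum.distrib sum_distrib_left mult.left_commute)

lemma lin_obj:
  fixes f :: "real^'n1" and q :: "'s::finite \<Rightarrow> real^'n2"
  shows "linear (\<lambda>u::((real^'n1) \<times> (real^'n2^'s)). f \<bullet> fst u + (\<Sum>s\<in>UNIV. p s * (q s \<bullet> (snd u $ s))))"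
  by (rule linearI) (simp_all add: inner_add_right distrib_left sum.distrib sum_distrib_left mult.left_commute)

lemma lin_x: "linear (\<lambda>u::((real^'n1) \<times> 'b::real_vector). - (fst u $ j))"
  by (rule linearI) simp_all

lemma lin_A: "linear (\<lambda>u::((real^'n1) \<times> 'b::real_vector). (A *v fst u) $ i)"
  by (rule linearI) (simp_all add: matrix_vector_right_distrib matrix_vector_mult_scaleR)

lemma lin_y: "linear (\<lambda>u::('a::real_vector \<times> (real^'n2^'s)). - ((snd u $ s) $ j))"
  by (rule linearI) simp_all

lemma lin_T: "linear (\<lambda>u::((real^'n1) \<times> (real^'n2^'s)). - ((T *v fst u + W *v (snd u $ s)) $ i))"
  by (rule linearI) (simp_all add: matrix_vector_right_distrib matrix_vector_mult_scaleR algebra_simps)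

lemma inner_vec_real: "(\<xi>::real^'s) \<bullet> v = (\<Sum>s\<in>UNIV. \<xi>$s * v$s)"
  by (simp add: inner_vec_def inner_real_def)

lemma simplex_bound:
  fixes c z :: "real^'d"
  assumes "c \<in> unit_simplex"
  shows "\<bar>c \<bullet> z\<bar> \<le> (\<Sum>i\<in>UNIV. \<bar>z$i\<bar>)"
proof -
  have c: "\<forall>i. 0 \<le> c$i" "(\<Sum>i\<in>UNIV. c$i) = 1" using assms by (auto simp: unit_simplex_def)
  have c1: "c$i \<le> 1" for i
  proof -
    have "c$i \<le> (\<Sum>i\<in>UNIV. c$i)" by (rule member_le_sum) (use c in auto)
    then show ?thesis using c by simp
  qed
  have "\<bar>c \<bullet> z\<bar> = \<bar>\<Sum>i\<in>UNIV. c$i * z$i\<bar>" by (simp add: inner_vec_real)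
  also have "\<dots> \<le> (\<Sum>i\<in>UNIV. \<bar>c$i * z$i\<bar>)" by (rule sum_abs)
  also have "\<dots> \<le> (\<Sum>i\<in>UNIV. \<bar>z$i\<bar>)"
  proof (rule sum_mono)
    fix i show "\<bar>c$i * z$i\<bar> \<le> \<bar>z$i\<bar>"
      using c c1[of i] by (simp add: abs_mult mult_left_le_one_le)
  qed
  finally show ?thesis .
qed

lemma simplex_bounded: "bounded (unit_simplex :: (real^'d) set)"
proof -
  have "unit_simplex \<subseteq> cbox (0::real^'d) (\<chi> i. 1)"
  proof
    fix c :: "real^'d" assume "c \<in> unit_simplex"
    then have c: "\<forall>i. 0 \<le> c$i" "(\<Sum>i\<in>UNIV. c$i) = 1" by (auto simp: unit_simplex_def)
    have "c$i \<le> 1" for i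
    proof -
      have "c$i \<le> (\<Sum>i\<in>UNIV. c$i)" by (rule member_le_sum) (use c in auto)
      then show ?thesis using c by simp
    qed
    then show "c \<in> cbox 0 (\<chi> i. 1)" using c by (simp add: mem_box_cart)
  qed
  then show ?thesis using bounded_cbox bounded_subset by blast
qed

theorem theorem2:
  fixes p :: "'s::finite \<Rightarrow> real"
    and \<alpha> :: real
    and zv :: "'k::finite \<Rightarrow> real^'d" and pz :: "'k \<Rightarrow> real"
    and C :: "(real^'d) set"
    and A :: "real^'n1^'m1" and b :: "real^'m1" and f :: "real^'n1"
    and q :: "'s \<Rightarrow> real^'n2"
    and T :: "'s \<Rightarrow> real^'n1^'m2" and W :: "'s \<Rightarrow> real^'n2^'m2" and h :: "'s \<Rightarrow> real^'m2"
    and gbar :: "'s \<Rightarrow> real^'n1^'d" and gtil :: "'s \<Rightarrow> real^'n2^'d"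
    and F :: "((real^'n1) \<times> (real^'n2^'s)) set"
    and obj :: "real^'n1 \<Rightarrow> real^'n2^'s \<Rightarrow> real"
    and cvG :: "real^'d \<Rightarrow> real^'n1 \<Rightarrow> real^'n2^'s \<Rightarrow> real"
    and cvZ :: "real^'d \<Rightarrow> real"
    and L :: "real^'n1 \<Rightarrow> real^'n2^'s \<Rightarrow> (real^'d \<Rightarrow> real) \<Rightarrow> real"
    and P :: "((real^'n1) \<times> (real^'n2^'s)) set"
    and dualfun :: "(real^'d \<Rightarrow> real) \<Rightarrow> real"
  assumes p_pos: "\<forall>s. 0 < p s" and p_sum: "(\<Sum>s\<in>UNIV. p s) = 1"
    and alpha: "0 \<le> \<alpha>" "\<alpha> < 1"
    and pz_nonneg: "\<forall>k. 0 \<le> pz k" and pz_sum: "(\<Sum>k\<in>UNIV. pz k) = 1"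
    and C_poly: "polyhedron C" and C_ne: "C \<noteq> {}" and C_simplex: "C \<subseteq> unit_simplex"
    and F_def: "F = {(x, y). 0 \<le> x \<and> A *v x \<le> b \<and>
                      (\<forall>s. 0 \<le> y $ s \<and> T s *v x + W s *v (y $ s) \<ge> h s)}"
    and F_compact: "compact F"
    and obj_def: "\<And>x y. obj x y = f \<bullet> x + (\<Sum>s\<in>UNIV. p s * (q s \<bullet> (y $ s)))"
    and cvG_def: "\<And>c x y. cvG c x y =
           cvar \<alpha> UNIV p (\<lambda>s. c \<bullet> (gbar s *v x + gtil s *v (y $ s)))"
    and cvZ_def: "\<And>c. cvZ c = cvar \<alpha> UNIV pz (\<lambda>k. c \<bullet> zv k)"
    and L_def: "\<And>x y \<mu>. L x y \<mu> = obj x y + fint \<mu> (\<lambda>c. cvG c x y) - fint \<mu> cvZ"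
    and P_def: "P = {(x, y) \<in> F. \<forall>c\<in>C. cvG c x y \<le> cvZ c}"
    and dualfun_def: "\<And>\<mu>. dualfun \<mu> = (INF (x, y)\<in>F. L x y \<mu>)"
    and primal_opt_exists: "\<exists>(x, y)\<in>P. \<forall>(x', y')\<in>P. obj x y \<le> obj x' y'"
  shows "(\<exists>\<mu>s\<in>MFplus C. (\<forall>\<mu>\<in>MFplus C. dualfun \<mu> \<le> dualfun \<mu>s) \<and>
             (\<forall>(x, y)\<in>P. (\<forall>(x', y')\<in>P. obj x y \<le> obj x' y') \<longrightarrow> dualfun \<mu>s = obj x y))
       \<and> (\<forall>xs ys \<mu>s. (xs, ys) \<in> P \<longrightarrow> \<mu>s \<in> MFplus C \<longrightarrow>
            (((\<forall>(x', y')\<in>P. obj xs ys \<le> obj x' y') \<and> (\<forall>\<mu>\<in>MFplus C. dualfun \<mu> \<le> dualfun \<mu>s))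
             \<longleftrightarrow> (fint \<mu>s (\<lambda>c. cvG c xs ys) = fint \<mu>s cvZ \<and>
                  (\<forall>(x, y)\<in>F. L xs ys \<mu>s \<le> L x y \<mu>s))))"
proof -
  define k where "k = 1/(1-\<alpha>)"
  have k1: "1 \<le> k" using alpha by (simp add: k_def)
  have p0: "\<forall>s. 0 \<le> p s" using p_pos by (simp add: less_imp_le)
  define gv where "gv x y s = gbar s *v x + gtil s *v (y $ s)" for x y s
  define ell where "ell c (\<xi>::real^'s) x y = (\<Sum>s\<in>UNIV. \<xi>$s * (c \<bullet> gv x y s))" for c \<xi> x y
  have cvG_gv: "cvG c x y = cvar \<alpha> UNIV p (\<lambda>s. c \<bullet> gv x y s)" for c x y
    by (simp add: cvG_def gv_def)
  have lin_ell': "linear (\<lambda>u. ell c \<xi> (fst u) (snd u))" for c \<xi>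
    unfolding ell_def gv_def by (rule lin_ell)
  have ell_inner: "ell c \<xi> x y = (\<chi> s. c \<bullet> gv x y s) \<bullet> \<xi>" for c \<xi> x y
    by (simp add: ell_def inner_vec_real mult.commute)
  define Qs where "Qs = {\<xi>::real^'s. (\<forall>s. 0 \<le> \<xi>$s \<and> \<xi>$s \<le> k * p s) \<and> (\<Sum>s\<in>UNIV. \<xi>$s) = 1}"
  have Qs_eq: "Qs = cbox 0 (\<chi> s. k * p s) \<inter> {\<xi>. (\<chi> s. 1) \<bullet> \<xi> = 1}"
    by (auto simp: Qs_def mem_box_cart inner_vec_real)
  have "polyhedron Qs" unfolding Qs_eq
    by (intro polyhedron_Int polyhedron_interval polyhedron_hyperplane)
  moreover have "bounded Qs" unfolding Qs_eq by (rule bounded_Int) (simp add: bounded_cbox)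
  ultimately obtain \<Xi> where Xi: "finite \<Xi>" "\<Xi> \<subseteq> Qs" "Qs = convex hull \<Xi>"
    using poly_hull by blast
  have G1: "ell c \<xi> x y \<le> cvG c x y" if "\<xi> \<in> Qs" for c \<xi> x y
  proof -
    have "\<forall>s. 0 \<le> \<xi>$s \<and> \<xi>$s \<le> (1/(1-\<alpha>)) * p s" "(\<Sum>s\<in>UNIV. \<xi>$s) = 1"
      using that by (auto simp: Qs_def k_def)
    from cvar_ge[OF alpha p0 this, of "\<lambda>s. c \<bullet> gv x y s"]
    show ?thesis by (simp add: ell_def cvG_gv)
  qed
  have G3: "cvG c x y \<le> t" if "\<forall>\<xi>\<in>\<Xi>. ell c \<xi> x y \<le> t" for c x y t
  proof -
    obtain \<eta> \<xi>f where e: "\<forall>s. 0 \<le> \<xi>f s \<and> \<xi>f s \<le> (1/(1-\<alpha>)) * p s" "(\<Sum>s\<in>UNIV. \<xi>f s) = 1"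
      "(\<Sum>s\<in>UNIV. \<xi>f s * (c \<bullet> gv x y s)) = cvar \<alpha> UNIV p (\<lambda>s. c \<bullet> gv x y s)"
      using cvar_eq[OF alpha p0 p_sum, of "\<lambda>s. c \<bullet> gv x y s"] by blast
    have "(\<chi> s. \<xi>f s) \<in> Qs" using e by (simp add: Qs_def k_def)
    hence "(\<chi> s. \<xi>f s) \<in> convex hull \<Xi>" using Xi by simp
    moreover have "\<forall>\<xi>\<in>\<Xi>. (\<chi> s. c \<bullet> gv x y s) \<bullet> \<xi> \<le> t" using that ell_inner by simp
    ultimately have "(\<chi> s. c \<bullet> gv x y s) \<bullet> (\<chi> s. \<xi>f s) \<le> t" using conv_le by blast
    then show ?thesis using e(3) by (simp add: cvG_gv inner_vec_real mult.commute)
  qed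
  have pz0: "\<forall>j. 0 \<le> pz j" using pz_nonneg by simp
  define M where "M = (\<Sum>j\<in>UNIV. \<Sum>i\<in>UNIV. \<bar>zv j $ i\<bar>)"
  have Mb: "\<bar>c \<bullet> zv j\<bar> \<le> M" if "c \<in> C" for c j
  proof -
    have "\<bar>c \<bullet> zv j\<bar> \<le> (\<Sum>i\<in>UNIV. \<bar>zv j $ i\<bar>)" using that C_simplex simplex_bound by blast
    also have "\<dots> \<le> M" unfolding M_def by (rule member_le_sum) (auto intro: sum_nonneg)
    finally show ?thesis .
  qed
  define Pb where "Pb = (C \<times> (cbox (-M) M \<times> cbox (0::real^'k) (\<chi> j. 2 * M))) \<inter>
      (\<Inter>j. {z. (zv j, -1::real, - axis j (1::real)) \<bullet> z \<le> 0})"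
  have aux: "(a + (- b - d) \<le> 0) \<longleftrightarrow> (a - b \<le> d)" for a b d :: real by linarith
  have Pb_mem: "(c, \<eta>, w) \<in> Pb \<longleftrightarrow> c \<in> C \<and> -M \<le> \<eta> \<and> \<eta> \<le> M \<and>
      (\<forall>j. 0 \<le> w$j \<and> w$j \<le> 2 * M \<and> c \<bullet> zv j - \<eta> \<le> w$j)" for c \<eta> w
    by (auto simp: Pb_def mem_box_cart inner_Pair inner_axis' inner_axis inner_commute aux)
  have "polyhedron Pb"
  proof -
    have "polyhedron (C \<times> (cbox (-M) M \<times> cbox (0::real^'k) (\<chi> j. 2 * M)))"
      by (intro polyhedron_Times C_poly polyhedron_interval)
    moreover have "polyhedron (\<Inter>j. {z::(real^'d) \<times> real \<times> (real^'k). (zv j, -1::real, - axis j (1::real)) \<bullet> z \<le> 0})"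
      by (intro polyhedron_Inter) (auto simp: polyhedron_halfspace_le)
    ultimately show ?thesis unfolding Pb_def by (rule polyhedron_Int)
  qed
  moreover have "bounded Pb"
  proof -
    have "bounded C" using C_simplex simplex_bounded bounded_subset by blast
    then have "bounded (C \<times> (cbox (-M) M \<times> cbox (0::real^'k) (\<chi> j. 2 * M)))"
      by (intro bounded_Times bounded_cbox)
    then show ?thesis unfolding Pb_def by (intro bounded_Int disjI1)
  qed
  ultimately obtain E where E: "finite E" "E \<subseteq> Pb" "Pb = convex hull E"
    using poly_hull by blast
  define C0 where "C0 = fst ` E"
  have C0C: "C0 \<subseteq> C" using E(2) by (auto simp: C0_def Pb_def)
  have finC0: "finite C0" using E(1) by (simp add: C0_def)
  have R: "cvG c x y \<le> cvZ c"
    if H: "\<forall>c'\<in>C0. \<forall>\<xi>\<in>\<Xi>. ell c' \<xi> x y \<le> cvZ c'" and cC: "c \<in> C" for x y c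
  proof -
    obtain \<eta>s where es0: "\<eta>s \<in> range (\<lambda>j. c \<bullet> zv j)"
      "cvar \<alpha> UNIV pz (\<lambda>j. c \<bullet> zv j) = \<eta>s + (1/(1-\<alpha>)) * (\<Sum>j\<in>UNIV. pz j * max 0 (c \<bullet> zv j - \<eta>s))"
      using cvar_eq[OF alpha pz0 pz_sum, of "\<lambda>j. c \<bullet> zv j"] by blast
    have es: "\<eta>s \<in> range (\<lambda>j. c \<bullet> zv j)"
      "cvZ c = \<eta>s + (1/(1-\<alpha>)) * (\<Sum>j\<in>UNIV. pz j * max 0 (c \<bullet> zv j - \<eta>s))"
      using es0 by (simp_all add: cvZ_def)
    define ws where "ws = (\<chi> j. max 0 (c \<bullet> zv j - \<eta>s))"
    have etab: "\<bar>\<eta>s\<bar> \<le> M" using es(1) Mb[OF cC] by auto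
    have "(c, \<eta>s, ws) \<in> Pb" unfolding Pb_mem
    proof (intro conjI allI cC)
      fix j
      show "0 \<le> ws$j" "c \<bullet> zv j - \<eta>s \<le> ws$j" by (auto simp: ws_def)
      show "ws$j \<le> 2 * M" using Mb[OF cC, of j] etab by (auto simp: ws_def)
    qed (use etab in auto)
    hence P0: "(c, \<eta>s, ws) \<in> convex hull E" using E(3) by simp
    have "ell c \<xi> x y \<le> cvZ c" if xi: "\<xi> \<in> \<Xi>" for \<xi>
    proof -
      define hv where "hv = ((\<Sum>s\<in>UNIV. \<xi>$s *\<^sub>R gv x y s), -1::real, - (\<chi> j. k * pz j))"
      have hv_eq: "hv \<bullet> (c', \<eta>', w') = ell c' \<xi> x y - \<eta>' - k * (\<Sum>j\<in>UNIV. pz j * w'$j)" for c' \<eta>' w'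
      proof -
        have t1: "(\<Sum>s\<in>UNIV. \<xi>$s *\<^sub>R gv x y s) \<bullet> c' = ell c' \<xi> x y"
          by (simp add: ell_def inner_sum_left inner_commute[of _ c'] inner_sum_right)
        have t3: "(\<chi> j. k * pz j) \<bullet> w' = k * (\<Sum>j\<in>UNIV. pz j * w'$j)"
          by (simp add: inner_vec_real sum_distrib_left mult.assoc)
        show ?thesis by (simp add: hv_def inner_Pair t1 t3)
      qed
      have "hv \<bullet> e \<le> 0" if eE: "e \<in> E" for e
      proof -
        obtain c' \<eta>' w' where e: "e = (c', \<eta>', w')" by (cases e) auto
        have eP: "(c', \<eta>', w') \<in> Pb" using E(2) eE e by auto
        have "c' \<in> C0" using eE e by (force simp: C0_def)
        hence "ell c' \<xi> x y \<le> cvZ c'" using H xi by blast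
        also have "cvZ c' \<le> \<eta>' + (1/(1-\<alpha>)) * (\<Sum>j\<in>UNIV. pz j * max 0 (c' \<bullet> zv j - \<eta>'))"
          unfolding cvZ_def by (rule cvar_le[OF alpha pz0 pz_sum])
        also have "\<dots> \<le> \<eta>' + k * (\<Sum>j\<in>UNIV. pz j * w'$j)"
        proof -
          have "(\<Sum>j\<in>UNIV. pz j * max 0 (c' \<bullet> zv j - \<eta>')) \<le> (\<Sum>j\<in>UNIV. pz j * w'$j)"
            using eP pz0 unfolding Pb_mem by (intro sum_mono mult_left_mono) auto
          then show ?thesis using k1 alpha unfolding k_def by (simp add: divide_right_mono)
        qed
        finally show ?thesis using hv_eq e by simp
      qed
      from conv_le[OF _ P0] this have "hv \<bullet> (c, \<eta>s, ws) \<le> 0" by blast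
      then show ?thesis unfolding hv_eq using es(2) by (simp add: ws_def k_def)
    qed
    then show ?thesis using G3[of c x y "cvZ c"] by blast
  qed
  define Lc :: "('n1, 'm1, 's, 'n2, 'm2, (real^'d) \<times> (real^'s)) cidx \<Rightarrow> (real^'n1) \<times> (real^'n2^'s) \<Rightarrow> real"
    where "Lc = (\<lambda>i u. case i of Cx j \<Rightarrow> - (fst u $ j) | CA i \<Rightarrow> (A *v fst u) $ i | Cy s j \<Rightarrow> - ((snd u $ s) $ j)
       | CT s i \<Rightarrow> - ((T s *v fst u + W s *v (snd u $ s)) $ i) | CZ cx \<Rightarrow> ell (fst cx) (snd cx) (fst u) (snd u))"
  define bc :: "('n1, 'm1, 's, 'n2, 'm2, (real^'d) \<times> (real^'s)) cidx \<Rightarrow> real"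
    where "bc = (\<lambda>i. case i of Cx j \<Rightarrow> 0 | CA i \<Rightarrow> b $ i | Cy s j \<Rightarrow> 0 | CT s i \<Rightarrow> - (h s $ i)
       | CZ cx \<Rightarrow> cvZ (fst cx))"
  define IF :: "('n1, 'm1, 's, 'n2, 'm2, (real^'d) \<times> (real^'s)) cidx set"
    where "IF = range Cx \<union> range CA \<union> range (\<lambda>(s,j). Cy s j) \<union> range (\<lambda>(s,i). CT s i)"
  define IZ :: "('n1, 'm1, 's, 'n2, 'm2, (real^'d) \<times> (real^'s)) cidx set"
    where "IZ = CZ ` (C0 \<times> \<Xi>)"
  define I where "I = IF \<union> IZ"
  have finIF: "finite IF" by (simp add: IF_def)
  have finIZ: "finite IZ" using finC0 Xi(1) by (simp add: IZ_def)
  have finI: "finite I" using finIF finIZ by (simp add: I_def)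
  have disj: "IF \<inter> IZ = {}" by (auto simp: IF_def IZ_def)
  have linL: "linear (Lc i)" for i
  proof (cases i)
    case (Cx j) then show ?thesis using lin_x[of j] by (simp add: Lc_def)
  next
    case (CA j) then show ?thesis using lin_A[of A j] by (simp add: Lc_def)
  next
    case (Cy s j) then show ?thesis using lin_y[of s j] by (simp add: Lc_def)
  next
    case (CT s j) then show ?thesis using lin_T[of "T s" "W s" s j] by (simp add: Lc_def)
  next
    case (CZ cx) then show ?thesis using lin_ell'[of "fst cx" "snd cx"] by (simp add: Lc_def)
  qed
  have IF_iff: "(\<forall>i\<in>IF. Q i) \<longleftrightarrow> (\<forall>j. Q (Cx j)) \<and> (\<forall>i. Q (CA i)) \<and> (\<forall>s j. Q (Cy s j)) \<and> (\<forall>s i. Q (CT s i))"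
    for Q :: "('n1, 'm1, 's, 'n2, 'm2, (real^'d) \<times> (real^'s)) cidx \<Rightarrow> bool"
  proof -
    have "(\<forall>i\<in>IF. Q i) \<longleftrightarrow> (\<forall>j. Q (Cx j)) \<and> (\<forall>i. Q (CA i)) \<and> (\<forall>p. Q (case p of (s,j) \<Rightarrow> Cy s j))
         \<and> (\<forall>p. Q (case p of (s,i) \<Rightarrow> CT s i))"
      unfolding IF_def ball_Un ball_image_iff' by simp
    then show ?thesis by (simp add: split_paired_All)
  qed
  have F_iff: "(x, y) \<in> F \<longleftrightarrow> (\<forall>i\<in>IF. Lc i (x, y) \<le> bc i)" for x y
  proof -
    have aux2: "(- a - d \<le> - e) \<longleftrightarrow> (e \<le> a + d)" for a d e :: real by linarith
    show ?thesis unfolding IF_iff by (auto simp: F_def Lc_def bc_def less_eq_vec_def aux2)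
  qed
  have LZ: "Lc (CZ (c, \<xi>)) (x, y) = ell c \<xi> x y" "bc (CZ (c, \<xi>)) = cvZ c" for c \<xi> x y
    by (simp_all add: Lc_def bc_def)
  have feasP: "(\<forall>i\<in>I. Lc i (x, y) \<le> bc i) \<longleftrightarrow> (x, y) \<in> P" for x y
  proof
    assume H: "\<forall>i\<in>I. Lc i (x, y) \<le> bc i"
    then have xyF: "(x, y) \<in> F" using F_iff by (simp add: I_def)
    have "\<forall>c'\<in>C0. \<forall>\<xi>\<in>\<Xi>. ell c' \<xi> x y \<le> cvZ c'"
    proof (intro ballI)
      fix c' \<xi> assume "c' \<in> C0" "\<xi> \<in> \<Xi>"
      then have "CZ (c', \<xi>) \<in> I" by (simp add: I_def IZ_def)
      then show "ell c' \<xi> x y \<le> cvZ c'" using H LZ by metis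
    qed
    then show "(x, y) \<in> P" using xyF R by (simp add: P_def)
  next
    assume xyP: "(x, y) \<in> P"
    then have xyF: "(x, y) \<in> F" by (simp add: P_def)
    show "\<forall>i\<in>I. Lc i (x, y) \<le> bc i"
    proof
      fix i assume "i \<in> I"
      then consider "i \<in> IF" | c \<xi> where "c \<in> C0" "\<xi> \<in> \<Xi>" "i = CZ (c, \<xi>)"
        by (auto simp: I_def IZ_def)
      then show "Lc i (x, y) \<le> bc i"
      proof cases
        case 1 then show ?thesis using xyF F_iff by blast
      next
        case 2
        have "ell c \<xi> x y \<le> cvG c x y" using G1 Xi(2) 2 by blast
        also have "\<dots> \<le> cvZ c" using xyP C0C 2 by (auto simp: P_def)
        finally show ?thesis using 2 LZ by simp
      qed
    qed
  qed
  from primal_opt_exists obtain x0 y0 where x0P: "(x0, y0) \<in> P"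
    and opt0: "\<forall>(x', y')\<in>P. obj x0 y0 \<le> obj x' y'" by auto
  define v where "v = obj x0 y0"
  have x0F: "(x0, y0) \<in> F" using x0P by (simp add: P_def)
  have obj_eq: "(\<lambda>u. obj (fst u) (snd u)) = (\<lambda>u. f \<bullet> fst u + (\<Sum>s\<in>UNIV. p s * (q s \<bullet> (snd u $ s))))"
    by (simp add: obj_def)
  have lob: "linear (\<lambda>u. obj (fst u) (snd u))" unfolding obj_eq by (rule lin_obj)
  have "\<exists>l. (\<forall>i\<in>I. 0 \<le> l i) \<and> (\<forall>u. obj (fst (x0, y0)) (snd (x0, y0)) \<le>
      obj (fst u) (snd u) + (\<Sum>i\<in>I. l i * (Lc i u - bc i)))"
  proof (rule lp_lagrange_lin[OF finI linL lob])
    show "\<forall>i\<in>I. Lc i (x0, y0) \<le> bc i" using feasP x0P by blast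
    fix u assume "\<forall>i\<in>I. Lc i u \<le> bc i"
    then have "(fst u, snd u) \<in> P" using feasP[of "fst u" "snd u"] by simp
    then show "obj (fst (x0, y0)) (snd (x0, y0)) \<le> obj (fst u) (snd u)" using opt0 by auto
  qed
  then obtain l where l0: "\<forall>i\<in>I. 0 \<le> l i"
    and lag: "\<And>u. v \<le> obj (fst u) (snd u) + (\<Sum>i\<in>I. l i * (Lc i u - bc i))"
    by (auto simp: v_def)
  define \<mu>s where "\<mu>s c = (if c \<in> C0 then (\<Sum>\<xi>\<in>\<Xi>. l (CZ (c, \<xi>))) else 0)" for c
  have mus0: "0 \<le> \<mu>s c" for c
    using l0 by (auto simp: \<mu>s_def I_def IZ_def intro!: sum_nonneg)
  have mus_supp: "{c. \<mu>s c \<noteq> 0} \<subseteq> C0" by (auto simp: \<mu>s_def)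
  have musMF: "\<mu>s \<in> MFplus C"
    using mus0 mus_supp finC0 C0C by (auto simp: MFplus_def intro: finite_subset)
  have fint_S: "fint \<mu> u = (\<Sum>c\<in>S. u c * \<mu> c)" if "finite S" "{c. \<mu> c \<noteq> 0} \<subseteq> S" for \<mu> u S
    unfolding fint_def by (rule sum.mono_neutral_left) (use that in auto)
  have Ldiff: "fint \<mu> (\<lambda>c. cvG c x y) - fint \<mu> cvZ = (\<Sum>c\<in>S. \<mu> c * (cvG c x y - cvZ c))"
    if "finite S" "{c. \<mu> c \<noteq> 0} \<subseteq> S" for \<mu> x y S
    using fint_S[OF that, of "\<lambda>c. cvG c x y"] fint_S[OF that, of cvZ]
    by (simp add: sum_subtractf[symmetric] algebra_simps)
  have strong: "v \<le> L x y \<mu>s" if xyF: "(x, y) \<in> F" for x y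
  proof -
    have "(\<Sum>i\<in>I. l i * (Lc i (x, y) - bc i)) = (\<Sum>i\<in>IF. l i * (Lc i (x, y) - bc i)) + (\<Sum>i\<in>IZ. l i * (Lc i (x, y) - bc i))"
      unfolding I_def using finIF finIZ disj by (rule sum.union_disjoint)
    also have "(\<Sum>i\<in>IF. l i * (Lc i (x, y) - bc i)) \<le> 0"
    proof (rule sum_nonpos)
      fix i assume "i \<in> IF"
      then have "0 \<le> l i" "Lc i (x, y) - bc i \<le> 0" using l0 xyF F_iff by (auto simp: I_def)
      then show "l i * (Lc i (x, y) - bc i) \<le> 0" by (rule mult_nonneg_nonpos)
    qed
    also have "(\<Sum>i\<in>IZ. l i * (Lc i (x, y) - bc i)) = (\<Sum>c\<in>C0. \<Sum>\<xi>\<in>\<Xi>. l (CZ (c, \<xi>)) * (ell c \<xi> x y - cvZ c))"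
    proof -
      have "(\<Sum>i\<in>IZ. l i * (Lc i (x, y) - bc i)) = (\<Sum>cx\<in>C0 \<times> \<Xi>. l (CZ cx) * (Lc (CZ cx) (x, y) - bc (CZ cx)))"
        unfolding IZ_def by (subst sum.reindex) (simp_all add: inj_on_def)
      also have "\<dots> = (\<Sum>cx\<in>C0 \<times> \<Xi>. l (CZ cx) * (ell (fst cx) (snd cx) x y - cvZ (fst cx)))"
        by (rule sum.cong) (auto simp: LZ)
      also have "\<dots> = (\<Sum>c\<in>C0. \<Sum>\<xi>\<in>\<Xi>. l (CZ (c, \<xi>)) * (ell c \<xi> x y - cvZ c))"
        by (subst sum.cartesian_product') simp
      finally show ?thesis .
    qed
    also have "\<dots> \<le> (\<Sum>c\<in>C0. \<Sum>\<xi>\<in>\<Xi>. l (CZ (c, \<xi>)) * (cvG c x y - cvZ c))"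
    proof (intro sum_mono mult_left_mono)
      fix c \<xi> assume "c \<in> C0" "\<xi> \<in> \<Xi>"
      then show "0 \<le> l (CZ (c, \<xi>))" using l0 by (simp add: I_def IZ_def)
      show "ell c \<xi> x y - cvZ c \<le> cvG c x y - cvZ c" using G1 Xi(2) \<open>\<xi> \<in> \<Xi>\<close> by fastforce
    qed
    also have "\<dots> = (\<Sum>c\<in>C0. \<mu>s c * (cvG c x y - cvZ c))"
      by (rule sum.cong) (auto simp: \<mu>s_def sum_distrib_right)
    also have "\<dots> = fint \<mu>s (\<lambda>c. cvG c x y) - fint \<mu>s cvZ"
      using Ldiff[OF finC0 mus_supp] by simp
    finally have "(\<Sum>i\<in>I. l i * (Lc i (x, y) - bc i)) \<le> fint \<mu>s (\<lambda>c. cvG c x y) - fint \<mu>s cvZ"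
      by simp
    then show ?thesis using lag[of "(x, y)"] by (simp add: L_def)
  qed
  obtain B where B: "\<forall>u\<in>F. norm u \<le> B"
    using compact_imp_bounded[OF F_compact] unfolding bounded_iff by blast
  define pv where "pv = (\<chi> s. p s)"
  have pvQ: "pv \<in> Qs"
  proof -
    have "p s \<le> k * p s" for s using mult_right_mono[OF k1 p0[rule_format, of s]] by simp
    then show ?thesis using p0 p_sum by (simp add: Qs_def pv_def)
  qed
  have MF: "finite {c. \<mu> c \<noteq> 0}" "{c. \<mu> c \<noteq> 0} \<subseteq> C" "\<forall>c. 0 \<le> \<mu> c" if "\<mu> \<in> MFplus C" for \<mu>
    using that by (auto simp: MFplus_def)
  have W1: "fint \<mu> (\<lambda>c. cvG c x y) - fint \<mu> cvZ \<le> 0" if "\<mu> \<in> MFplus C" "(x, y) \<in> P" for \<mu> x y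
  proof -
    have "fint \<mu> (\<lambda>c. cvG c x y) - fint \<mu> cvZ = (\<Sum>c\<in>{c. \<mu> c \<noteq> 0}. \<mu> c * (cvG c x y - cvZ c))"
      using Ldiff[OF MF(1)[OF that(1)]] by simp
    also have "\<dots> \<le> 0"
    proof (rule sum_nonpos)
      fix c assume "c \<in> {c. \<mu> c \<noteq> 0}"
      then have "c \<in> C" using MF(2)[OF that(1)] by blast
      then have "cvG c x y - cvZ c \<le> 0" using that(2) by (simp add: P_def)
      then show "\<mu> c * (cvG c x y - cvZ c) \<le> 0" using MF(3)[OF that(1)] by (simp add: mult_nonneg_nonpos)
    qed
    finally show ?thesis .
  qed
  have W2: "bdd_below ((\<lambda>(x, y). L x y \<mu>) ` F)" if "\<mu> \<in> MFplus C" for \<mu>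
  proof -
    define S where "S = {c. \<mu> c \<noteq> 0}"
    define m where "m = - (norm (adjoint (\<lambda>u. obj (fst u) (snd u)) 1) * B) +
       (\<Sum>c\<in>S. \<mu> c * (- (norm (adjoint (\<lambda>u. ell c pv (fst u) (snd u)) 1) * B) - cvZ c))"
    show ?thesis
    proof (rule bdd_belowI2)
      fix u assume uF: "u \<in> F"
      obtain x y where u: "u = (x, y)" by (cases u)
      have nb: "norm (x, y) \<le> B" using B uF u by simp
      have "L x y \<mu> = obj x y + (\<Sum>c\<in>S. \<mu> c * (cvG c x y - cvZ c))"
      proof -
        have "fint \<mu> (\<lambda>c. cvG c x y) - fint \<mu> cvZ = (\<Sum>c\<in>S. \<mu> c * (cvG c x y - cvZ c))"
          unfolding S_def by (rule Ldiff) (use MF(1)[OF that] in auto)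
        then show ?thesis by (simp add: L_def)
      qed
      also have "\<dots> \<ge> m"
      proof -
        have "- (norm (adjoint (\<lambda>u. obj (fst u) (snd u)) 1) * B) \<le> obj (fst (x, y)) (snd (x, y))"
          by (rule lin_lower[OF lob nb])
        moreover have "(\<Sum>c\<in>S. \<mu> c * (- (norm (adjoint (\<lambda>u. ell c pv (fst u) (snd u)) 1) * B) - cvZ c))
            \<le> (\<Sum>c\<in>S. \<mu> c * (cvG c x y - cvZ c))"
        proof (rule sum_mono)
          fix c
          have "- (norm (adjoint (\<lambda>u. ell c pv (fst u) (snd u)) 1) * B) \<le> ell c pv (fst (x, y)) (snd (x, y))"
            by (rule lin_lower[OF lin_ell' nb])
          also have "\<dots> \<le> cvG c x y" using G1[OF pvQ] by simp
          finally show "\<mu> c * (- (norm (adjoint (\<lambda>u. ell c pv (fst u) (snd u)) 1) * B) - cvZ c)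
              \<le> \<mu> c * (cvG c x y - cvZ c)"
            using MF(3)[OF that] by (intro mult_left_mono) auto
        qed
        ultimately show ?thesis unfolding m_def by simp
      qed
      finally show "m \<le> (\<lambda>(x, y). L x y \<mu>) u" using u by simp
    qed
  qed
  have dual_le: "dualfun \<mu> \<le> L x y \<mu>" if "\<mu> \<in> MFplus C" "(x, y) \<in> F" for \<mu> x y
  proof -
    have "(INF (x, y)\<in>F. L x y \<mu>) \<le> (\<lambda>(x, y). L x y \<mu>) (x, y)"
      by (rule cINF_lower[OF W2[OF that(1)] that(2)])
    then show ?thesis by (simp add: dualfun_def)
  qed
  have Fne: "F \<noteq> {}" using x0F by blast
  have dual_ge: "t \<le> dualfun \<mu>" if "\<forall>(x, y)\<in>F. t \<le> L x y \<mu>" for \<mu> t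
    unfolding dualfun_def using Fne that by (intro cINF_greatest) auto
  have weak: "dualfun \<mu> \<le> obj x y" if "\<mu> \<in> MFplus C" "(x, y) \<in> P" for \<mu> x y
  proof -
    have "(x, y) \<in> F" using that(2) by (simp add: P_def)
    then have "dualfun \<mu> \<le> L x y \<mu>" using dual_le that(1) by blast
    also have "\<dots> \<le> obj x y" using W1[OF that] by (simp add: L_def)
    finally show ?thesis .
  qed
  have dmus: "dualfun \<mu>s = v"
  proof (rule antisym)
    show "dualfun \<mu>s \<le> v" using weak[OF musMF x0P] by (simp add: v_def)
    show "v \<le> dualfun \<mu>s" using strong by (intro dual_ge) auto
  qed
  have optv: "obj x y = v" if "(x, y) \<in> P" "\<forall>(x', y')\<in>P. obj x y \<le> obj x' y'" for x y
  proof -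
    have "obj x y \<le> obj x0 y0" using that(2) x0P by auto
    moreover have "obj x0 y0 \<le> obj x y" using opt0 that(1) by auto
    ultimately show ?thesis by (simp add: v_def)
  qed
  have part1: "\<exists>\<mu>s\<in>MFplus C. (\<forall>\<mu>\<in>MFplus C. dualfun \<mu> \<le> dualfun \<mu>s) \<and>
             (\<forall>(x, y)\<in>P. (\<forall>(x', y')\<in>P. obj x y \<le> obj x' y') \<longrightarrow> dualfun \<mu>s = obj x y)"
  proof (intro bexI[OF _ musMF] conjI)
    show "\<forall>\<mu>\<in>MFplus C. dualfun \<mu> \<le> dualfun \<mu>s" using weak[OF _ x0P] dmus by (simp add: v_def)
  next
    show "\<forall>(x, y)\<in>P. (\<forall>(x', y')\<in>P. obj x y \<le> obj x' y') \<longrightarrow> dualfun \<mu>s = obj x y"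
      using optv dmus by auto
  qed
  have part2: "((\<forall>(x', y')\<in>P. obj xs ys \<le> obj x' y') \<and> (\<forall>\<mu>\<in>MFplus C. dualfun \<mu> \<le> dualfun \<nu>))
             \<longleftrightarrow> (fint \<nu> (\<lambda>c. cvG c xs ys) = fint \<nu> cvZ \<and>
                  (\<forall>(x, y)\<in>F. L xs ys \<nu> \<le> L x y \<nu>))"
    if xsP: "(xs, ys) \<in> P" and nuMF: "\<nu> \<in> MFplus C" for xs ys \<nu>
  proof -
    define D where "D = fint \<nu> (\<lambda>c. cvG c xs ys) - fint \<nu> cvZ"
    have D0: "D \<le> 0" unfolding D_def by (rule W1[OF nuMF xsP])
    have LD: "L xs ys \<nu> = obj xs ys + D" by (simp add: L_def D_def)
    have xsF: "(xs, ys) \<in> F" using xsP by (simp add: P_def)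
    show ?thesis
    proof
      assume H: "(\<forall>(x', y')\<in>P. obj xs ys \<le> obj x' y') \<and> (\<forall>\<mu>\<in>MFplus C. dualfun \<mu> \<le> dualfun \<nu>)"
      have ov: "obj xs ys = v" using optv[OF xsP] H by blast
      have "v \<le> dualfun \<nu>" using H musMF dmus by auto
      also have "dualfun \<nu> \<le> L xs ys \<nu>" by (rule dual_le[OF nuMF xsF])
      finally have "v \<le> obj xs ys + D" using LD by simp
      hence Dz: "D = 0" using D0 ov by simp
      have "\<forall>(x, y)\<in>F. L xs ys \<nu> \<le> L x y \<nu>"
      proof (clarify)
        fix x y assume "(x, y) \<in> F"
        have "L xs ys \<nu> = v" using LD Dz ov by simp
        also have "v \<le> dualfun \<nu>" using H musMF dmus by auto
        also have "dualfun \<nu> \<le> L x y \<nu>" by (rule dual_le[OF nuMF \<open>(x, y) \<in> F\<close>])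
        finally show "L xs ys \<nu> \<le> L x y \<nu>" .
      qed
      then show "fint \<nu> (\<lambda>c. cvG c xs ys) = fint \<nu> cvZ \<and> (\<forall>(x, y)\<in>F. L xs ys \<nu> \<le> L x y \<nu>)"
        using Dz by (simp add: D_def)
    next
      assume H: "fint \<nu> (\<lambda>c. cvG c xs ys) = fint \<nu> cvZ \<and> (\<forall>(x, y)\<in>F. L xs ys \<nu> \<le> L x y \<nu>)"
      have Dz: "D = 0" using H by (simp add: D_def)
      have "L xs ys \<nu> \<le> dualfun \<nu>" using H by (intro dual_ge) auto
      hence od: "obj xs ys \<le> dualfun \<nu>" using LD Dz by simp
      show "(\<forall>(x', y')\<in>P. obj xs ys \<le> obj x' y') \<and> (\<forall>\<mu>\<in>MFplus C. dualfun \<mu> \<le> dualfun \<nu>)"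
      proof (intro conjI)
        show "\<forall>\<mu>\<in>MFplus C. dualfun \<mu> \<le> dualfun \<nu>"
        proof
          fix \<mu> assume "\<mu> \<in> MFplus C"
          then have "dualfun \<mu> \<le> obj xs ys" by (rule weak[OF _ xsP])
          then show "dualfun \<mu> \<le> dualfun \<nu>" using od by simp
        qed
      next
        show "\<forall>(x', y')\<in>P. obj xs ys \<le> obj x' y'"
        proof (clarify)
          fix x' y' assume "(x', y') \<in> P"
          then have "dualfun \<nu> \<le> obj x' y'" by (rule weak[OF nuMF])
          then show "obj xs ys \<le> obj x' y'" using od by simp
        qed
      qed
    qed
  qed
  show ?thesis using part1 part2 by blast
qed


end
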